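(* Let $\mathcal{M}$ be the set of compactly supported probability distributions on $\mathbb{R}$ (identified with their cdfs). A mapping $T:\mathcal{M}\to\mathcal{M}$ satisfies $T\circ T_d=T_d\circ T$ for every distortion function $d$ if and only if $T=T^u$ for some utility function $u$.
   Context: Increasing means non-decreasing. A distortion function is an increasing function $d:[0,1]\to[0,1]$ with $d(0)=0$ and $d(1)=1$ (not necessarily continuous). A utility function is an increasing continuous function $u:\mathbb{R}\to\mathbb{R}$. For a distortion function $d$, the probability distortion $T_d:\mathcal{M}\to\mathcal{M}$ is defined by $T_d(F)(x)=\lim_{y\downarrow x} d(F(y))$ for $x\in\mathbb{R}$. For a utility function $u$, the utility transform $T^u:\mathcal{M}\to\mathcal{M}$ maps the distribution of a random variable $X$ to the distribution of $u(X)$, i.e. $T^u(F)=F\circ u^{-1}$ with $F$ viewed as a measure. *)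

theory Defs
  imports "HOL-Analysis.Analysis" "HOL-Probability.Probability"
begin

definition cdfM :: "(real \<Rightarrow> real) set" where
  "cdfM = {F. mono F \<and> (\<forall>x. continuous (at_right x) F) \<and>
             (\<exists>a b. (\<forall>x<a. F x = 0) \<and> (\<forall>x\<ge>b. F x = 1))}"

definition distortion :: "(real \<Rightarrow> real) \<Rightarrow> bool" where
  "distortion d \<longleftrightarrow> mono_on {0..1} d \<and> d ` {0..1} \<subseteq> {0..1} \<and> d 0 = 0 \<and> d 1 = 1"

definition utility :: "(real \<Rightarrow> real) \<Rightarrow> bool" where
  "utility u \<longleftrightarrow> mono u \<and> continuous_on UNIV u"

definition Td :: "(real \<Rightarrow> real) \<Rightarrow> (real \<Rightarrow> real) \<Rightarrow> (real \<Rightarrow> real)" where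
  "Td d F = (\<lambda>x. Lim (at_right x) (\<lambda>y. d (F y)))"

definition Tu :: "(real \<Rightarrow> real) \<Rightarrow> (real \<Rightarrow> real) \<Rightarrow> (real \<Rightarrow> real)" where
  "Tu u F = cdf (distr (interval_measure F) borel u)"

end

theory Submission
  imports Defs
begin


lemma cdfM_D:
  assumes "F \<in> cdfM"
  shows "mono F" "\<And>x. continuous (at_right x) F" "\<exists>a b. (\<forall>x<a. F x = 0) \<and> (\<forall>x\<ge>b. F x = 1)"
  using assms unfolding cdfM_def by auto

lemma cdfM_bounds:
  assumes "F \<in> cdfM" shows "0 \<le> F x" "F x \<le> 1"
proof -
  obtain a b where ab: "\<forall>x<a. F x = 0" "\<forall>x\<ge>b. F x = 1" using cdfM_D(3)[OF assms] by blast
  have m: "mono F" using cdfM_D(1)[OF assms] .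
  have "F (min x (a-1)) \<le> F x" using m by (simp add: monoD)
  then show "0 \<le> F x" using ab by simp
  have "F x \<le> F (max x b)" using m by (simp add: monoD)
  then show "F x \<le> 1" using ab by simp
qed

lemma tendsto_right_Inf:
  fixes g :: "real \<Rightarrow> real"
  assumes m: "\<And>y z. y \<le> z \<Longrightarrow> g y \<le> g z" and lb: "\<And>y. L \<le> g y"
  shows "(g \<longlongrightarrow> Inf (g ` {x<..})) (at_right x)"
proof (rule order_tendstoI)
  have bdd: "bdd_below (g ` {x<..})" using lb unfolding bdd_below_def by blast
  fix a assume "a < Inf (g ` {x<..})"
  then have "\<forall>y\<in>{x<..}. a < g y"
    using cINF_lower[OF bdd] by (meson less_le_trans)
  then show "\<forall>\<^sub>F y in at_right x. a < g y"
    by (simp add: eventually_at_right_less eventually_at_filter)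
next
  have bdd: "bdd_below (g ` {x<..})" using lb unfolding bdd_below_def by blast
  fix a assume "Inf (g ` {x<..}) < a"
  then obtain y0 where y0: "y0 > x" "g y0 < a"
    using cInf_lessD[of "g ` {x<..}" a] by auto
  have "\<forall>\<^sub>F y in at_right x. y < y0"
    using y0(1) eventually_at_right_field by auto
  then show "\<forall>\<^sub>F y in at_right x. g y < a"
    by eventually_elim (use m y0 in \<open>meson le_less_trans less_imp_le\<close>)
qed

lemma Lim_right_Inf:
  fixes g :: "real \<Rightarrow> real"
  assumes m: "\<And>y z. y \<le> z \<Longrightarrow> g y \<le> g z" and lb: "\<And>y. L \<le> g y"
  shows "Lim (at_right x) g = Inf (g ` {x<..})"
  using tendsto_right_Inf[OF assms] by (intro tendsto_Lim) auto

lemma Td_eq: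
  assumes F: "F \<in> cdfM" and d: "distortion d"
  shows "Td d F x = Inf ((\<lambda>y. d (F y)) ` {x<..})"
    and "\<And>y. 0 \<le> d (F y)" "\<And>y. d (F y) \<le> 1"
    and "\<And>y z. y \<le> z \<Longrightarrow> d (F y) \<le> d (F z)"
proof -
  have dm: "mono_on {0..1} d" and di: "d ` {0..1} \<subseteq> {0..1}" using d unfolding distortion_def by auto
  show b: "0 \<le> d (F y)" "d (F y) \<le> 1" for y using di cdfM_bounds[OF F, of y] unfolding image_subset_iff by auto
  show m: "d (F y) \<le> d (F z)" if "y \<le> z" for y z
    using dm cdfM_bounds[OF F] monoD[OF cdfM_D(1)[OF F] that] by (auto intro: mono_onD)
  show "Td d F x = Inf ((\<lambda>y. d (F y)) ` {x<..})"
    unfolding Td_def by (rule Lim_right_Inf[of _ 0]) (use m b in auto)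
qed

definition Qp :: "(real \<Rightarrow> real) \<Rightarrow> real \<Rightarrow> real" where
  "Qp G p = Inf {y. G y > p}"
definition QT :: "(real \<Rightarrow> real) \<Rightarrow> real" where
  "QT G = Inf {y. G y \<ge> 1}"
definition stp :: "real \<Rightarrow> real \<Rightarrow> real" where
  "stp c = (\<lambda>x. if c \<le> x then 1 else 0)"
definition dP :: "real \<Rightarrow> real \<Rightarrow> real" where
  "dP p = (\<lambda>t. if t > p then 1 else 0)"
definition dT :: "real \<Rightarrow> real" where
  "dT = (\<lambda>t. if t \<ge> 1 then 1 else 0)"

lemma dP_dist: "0 \<le> p \<Longrightarrow> p < 1 \<Longrightarrow> distortion (dP p)"
  unfolding distortion_def dP_def mono_on_def by auto

lemma dT_dist: "distortion dT"
  unfolding distortion_def dT_def mono_on_def by auto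

lemma stp_cdfM: "stp c \<in> cdfM"
proof -
  have "continuous (at_right x) (stp c)" for x
  proof (cases "c \<le> x")
    case True
    have "\<forall>\<^sub>F y in at_right x. stp c y = stp c x"
      using True by (auto simp: stp_def eventually_at_right_less eventually_at_filter)
    then show ?thesis unfolding continuous_within by (rule tendsto_eventually)
  next
    case False
    then have "\<forall>\<^sub>F y in at_right x. y < c" using eventually_at_right_field[of _ x] by (auto intro!: exI[of _ c])
    then have "\<forall>\<^sub>F y in at_right x. stp c y = stp c x"
      by eventually_elim (use False in \<open>auto simp: stp_def\<close>)
    then show ?thesis unfolding continuous_within by (rule tendsto_eventually)
  qed
  moreover have "mono (stp c)" unfolding stp_def mono_def by auto
  moreover have "(\<forall>x<c. stp c x = 0) \<and> (\<forall>x\<ge>c. stp c x = 1)" unfolding stp_def by auto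
  ultimately show ?thesis unfolding cdfM_def by blast
qed

lemma stp_inj: "stp a = stp b \<Longrightarrow> a = b"
  unfolding stp_def by (metis linorder_le_cases one_neq_zero order_antisym)

lemma Qp_facts:
  assumes G: "G \<in> cdfM" and p: "0 \<le> p" "p < 1"
  shows "\<And>y. p < G y \<Longrightarrow> Qp G p \<le> y"
    and "\<And>z. Qp G p < z \<Longrightarrow> p < G z"
    and "\<And>y. y < Qp G p \<Longrightarrow> G y \<le> p"
proof -
  obtain a b where ab: "\<forall>x<a. G x = 0" "\<forall>x\<ge>b. G x = 1" using cdfM_D(3)[OF G] by blast
  have ne: "{y. G y > p} \<noteq> {}" using ab(2) p by (metis (mono_tags) empty_iff mem_Collect_eq order_refl)
  have bdd: "bdd_below {y. G y > p}"
    unfolding bdd_below_def using ab p by (metis linorder_not_le mem_Collect_eq order_less_asym)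
  show "Qp G p \<le> y" if "p < G y" for y
    unfolding Qp_def by (rule cInf_lower) (use that bdd in auto)
  show "p < G z" if h: "Qp G p < z" for z
  proof -
    obtain y where "p < G y" "y < z" using cInf_lessD[OF ne h[unfolded Qp_def]] by auto
    then show ?thesis using monoD[OF cdfM_D(1)[OF G], of y z] by auto
  qed
  show "G y \<le> p" if "y < Qp G p" for y
    using \<open>\<And>y. p < G y \<Longrightarrow> Qp G p \<le> y\<close> that by (meson linorder_not_le)
qed

lemma QT_facts:
  assumes G: "G \<in> cdfM"
  shows "\<And>y. 1 \<le> G y \<Longrightarrow> QT G \<le> y"
    and "\<And>z. QT G < z \<Longrightarrow> 1 \<le> G z"
    and "\<And>y. y < QT G \<Longrightarrow> G y < 1"
proof -
  obtain a b where ab: "\<forall>x<a. G x = 0" "\<forall>x\<ge>b. G x = 1" using cdfM_D(3)[OF G] by blast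
  have ne: "{y. G y \<ge> 1} \<noteq> {}" using ab(2) by (metis (mono_tags) empty_iff mem_Collect_eq order_refl)
  have bdd: "bdd_below {y. G y \<ge> 1}"
    unfolding bdd_below_def using ab by (metis linorder_not_le mem_Collect_eq zero_less_one)
  show "QT G \<le> y" if "1 \<le> G y" for y
    unfolding QT_def by (rule cInf_lower) (use that bdd in auto)
  show "1 \<le> G z" if h: "QT G < z" for z
  proof -
    obtain y where "1 \<le> G y" "y < z" using cInf_lessD[OF ne h[unfolded QT_def]] by auto
    then show ?thesis using monoD[OF cdfM_D(1)[OF G], of y z] by auto
  qed
  show "G y < 1" if "y < QT G" for y
    using \<open>\<And>y. 1 \<le> G y \<Longrightarrow> QT G \<le> y\<close> that by (meson linorder_not_le)
qed

lemma Inf_01: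
  fixes f :: "real \<Rightarrow> real"
  assumes "\<And>y. f y = 0 \<or> f y = 1"
  shows "(\<forall>y>x. f y = 1) \<Longrightarrow> Inf (f ` {x<..}) = 1"
    and "y > x \<Longrightarrow> f y = 0 \<Longrightarrow> Inf (f ` {x<..}) = 0"
proof -
  assume "\<forall>y>x. f y = 1"
  then have "f ` {x<..} = {1}" by (auto intro: image_eqI[of _ _ "x+1"])
  then show "Inf (f ` {x<..}) = 1" by simp
next
  assume "y > x" "f y = 0"
  have bdd: "bdd_below (f ` {x<..})" unfolding bdd_below_def using assms by (metis imageE order_refl zero_le_one)
  have "Inf (f ` {x<..}) \<le> 0" using cINF_lower[OF bdd, of y] \<open>y > x\<close> \<open>f y = 0\<close> by auto
  moreover have "0 \<le> Inf (f ` {x<..})" by (rule cINF_greatest) (use assms in \<open>auto, metis zero_le_one order_refl\<close>)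
  ultimately show "Inf (f ` {x<..}) = 0" by simp
qed

lemma Td_dP:
  assumes G: "G \<in> cdfM" and p: "0 \<le> p" "p < 1"
  shows "Td (dP p) G = stp (Qp G p)"
proof
  fix x
  have e: "Td (dP p) G x = Inf ((\<lambda>y. dP p (G y)) ` {x<..})" using Td_eq(1)[OF G dP_dist[OF p]] .
  have o: "\<And>y. dP p (G y) = 0 \<or> dP p (G y) = 1" unfolding dP_def by auto
  show "Td (dP p) G x = stp (Qp G p) x"
  proof (cases "Qp G p \<le> x")
    case True
    then have "\<forall>y>x. dP p (G y) = 1" using Qp_facts(2)[OF G p] by (auto simp: dP_def)
    then show ?thesis using e Inf_01(1)[OF o] True by (simp add: stp_def)
  next
    case False
    let ?y = "(x + Qp G p)/2"
    have "dP p (G ?y) = 0" using Qp_facts(3)[OF G p, of ?y] False by (auto simp: dP_def)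
    then show ?thesis using e Inf_01(2)[OF o, of x ?y] False by (simp add: stp_def)
  qed
qed

lemma Td_dT:
  assumes G: "G \<in> cdfM"
  shows "Td dT G = stp (QT G)"
proof
  fix x
  have e: "Td dT G x = Inf ((\<lambda>y. dT (G y)) ` {x<..})" using Td_eq(1)[OF G dT_dist] .
  have o: "\<And>y. dT (G y) = 0 \<or> dT (G y) = 1" unfolding dT_def by auto
  show "Td dT G x = stp (QT G) x"
  proof (cases "QT G \<le> x")
    case True
    then have "\<forall>y>x. dT (G y) = 1" using QT_facts(2)[OF G] by (auto simp: dT_def)
    then show ?thesis using e Inf_01(1)[OF o] True by (simp add: stp_def)
  next
    case False
    let ?y = "(x + QT G)/2"
    have "dT (G ?y) = 0" using QT_facts(3)[OF G, of ?y] False by (auto simp: dT_def)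
    then show ?thesis using e Inf_01(2)[OF o, of x ?y] False by (simp add: stp_def)
  qed
qed



lemma Qp_stp: "0 \<le> p \<Longrightarrow> p < 1 \<Longrightarrow> Qp (stp c) p = c"
proof -
  assume p: "0 \<le> p" "p < 1"
  have "{y. stp c y > p} = {c..}" using p by (auto simp: stp_def)
  then show ?thesis unfolding Qp_def by simp
qed

lemma QT_stp: "QT (stp c) = c"
proof -
  have "{y. stp c y \<ge> 1} = {c..}" by (auto simp: stp_def)
  then show ?thesis unfolding QT_def by simp
qed

lemma Qp_mono:
  assumes G: "G \<in> cdfM" and p: "0 \<le> p" "p \<le> p'" "p' < 1"
  shows "Qp G p \<le> Qp G p'"
proof (rule dense_ge)
  fix z assume "Qp G p' < z"
  then have "p' < G z" using Qp_facts(2)[OF G, of p' z] p by auto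
  then show "Qp G p \<le> z" using Qp_facts(1)[OF G, of p z] p by auto
qed

definition Fu :: "real \<Rightarrow> real \<Rightarrow> real" where
  "Fu x = (\<lambda>z. max 0 (min 1 (z - x)))"

lemma Fu_cdfM: "Fu x \<in> cdfM"
proof -
  have "continuous (at_right a) (Fu x)" for a
    unfolding Fu_def by (intro continuous_intros)
  moreover have "mono (Fu x)" unfolding Fu_def mono_def by auto
  moreover have "(\<forall>z<x. Fu x z = 0) \<and> (\<forall>z\<ge>x+1. Fu x z = 1)" unfolding Fu_def by auto
  ultimately show ?thesis unfolding cdfM_def by blast
qed

lemma Qp_Fu: "0 \<le> p \<Longrightarrow> p < 1 \<Longrightarrow> Qp (Fu x) p = x + p"
proof -
  assume p: "0 \<le> p" "p < 1"
  have "{y. Fu x y > p} = {x+p<..}" using p by (auto simp: Fu_def)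
  then show ?thesis unfolding Qp_def by simp
qed

lemma QT_Fu: "QT (Fu x) = x + 1"
proof -
  have "{y. Fu x y \<ge> 1} = {x+1..}" by (auto simp: Fu_def)
  then show ?thesis unfolding QT_def by simp
qed

definition Fm :: "real \<Rightarrow> real \<Rightarrow> real \<Rightarrow> real" where
  "Fm x y = (\<lambda>z. (stp x z + stp y z) / 2)"

lemma Fm_cdfM: assumes "x < y" shows "Fm x y \<in> cdfM"
proof -
  have "continuous (at_right a) (Fm x y)" for a
    unfolding Fm_def using cdfM_D(2)[OF stp_cdfM] by (intro continuous_intros) auto
  moreover have "mono (Fm x y)" unfolding Fm_def stp_def mono_def by auto
  moreover have "(\<forall>z<x. Fm x y z = 0) \<and> (\<forall>z\<ge>y. Fm x y z = 1)" using assms unfolding Fm_def stp_def by auto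
  ultimately show ?thesis unfolding cdfM_def by blast
qed

lemma Qp_Fm: assumes "x < y" shows "Qp (Fm x y) 0 = x" "Qp (Fm x y) (1/2) = y"
proof -
  have "{z. Fm x y z > 0} = {x..}" using assms by (auto simp: Fm_def stp_def)
  then show "Qp (Fm x y) 0 = x" unfolding Qp_def by simp
  have "{z. Fm x y z > 1/2} = {y..}" using assms by (auto simp: Fm_def stp_def)
  then show "Qp (Fm x y) (1/2) = y" unfolding Qp_def by simp
qed

locale commT =
  fixes T :: "(real \<Rightarrow> real) \<Rightarrow> (real \<Rightarrow> real)"
  assumes TM: "\<And>F. F \<in> cdfM \<Longrightarrow> T F \<in> cdfM"
    and comm: "\<And>d F. distortion d \<Longrightarrow> F \<in> cdfM \<Longrightarrow> T (Td d F) = Td d (T F)"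
begin

definition u :: "real \<Rightarrow> real" where "u c = Qp (T (stp c)) 0"

lemma T_stp: "T (stp c) = stp (u c)"
proof -
  have "Td (dP 0) (stp c) = stp c" using Td_dP[OF stp_cdfM, of 0] Qp_stp[of 0 c] by simp
  then have "T (stp c) = Td (dP 0) (T (stp c))" using comm[OF dP_dist stp_cdfM, of 0 c] by simp
  also have "\<dots> = stp (u c)" using Td_dP[OF TM[OF stp_cdfM], of 0] by (simp add: u_def)
  finally show ?thesis .
qed

lemma keyQ: assumes F: "F \<in> cdfM" and p: "0 \<le> p" "p < 1"
  shows "Qp (T F) p = u (Qp F p)"
proof -
  have "stp (Qp (T F) p) = Td (dP p) (T F)" using Td_dP[OF TM[OF F] p] by simp
  also have "\<dots> = T (Td (dP p) F)" using comm[OF dP_dist[OF p] F] by simp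
  also have "\<dots> = stp (u (Qp F p))" using Td_dP[OF F p] T_stp by simp
  finally show ?thesis by (rule stp_inj)
qed

lemma keyT: assumes F: "F \<in> cdfM"
  shows "QT (T F) = u (QT F)"
proof -
  have "stp (QT (T F)) = Td dT (T F)" using Td_dT[OF TM[OF F]] by simp
  also have "\<dots> = T (Td dT F)" using comm[OF dT_dist F] by simp
  also have "\<dots> = stp (u (QT F))" using Td_dT[OF F] T_stp by simp
  finally show ?thesis by (rule stp_inj)
qed

lemma u_mono: "x \<le> y \<Longrightarrow> u x \<le> u y"
proof (cases "x = y")
  case False
  assume "x \<le> y"
  then have xy: "x < y" using False by simp
  have "u x = Qp (T (Fm x y)) 0" using keyQ[OF Fm_cdfM[OF xy], of 0] Qp_Fm[OF xy] by simp
  also have "\<dots> \<le> Qp (T (Fm x y)) (1/2)" by (rule Qp_mono[OF TM[OF Fm_cdfM[OF xy]]]) auto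
  also have "\<dots> = u y" using keyQ[OF Fm_cdfM[OF xy], of "1/2"] Qp_Fm[OF xy] by simp
  finally show ?thesis .
qed simp

lemma u_right: "continuous (at_right x) u"
proof -
  let ?G = "T (Fu x)"
  have G: "?G \<in> cdfM" using TM[OF Fu_cdfM] .
  have q: "Qp ?G p = u (x + p)" if "0 \<le> p" "p < 1" for p
    using keyQ[OF Fu_cdfM that] Qp_Fu[OF that] by simp
  have "\<exists>\<delta>>0. u (x + \<delta>) - u x < e" if e: "e > 0" for e
  proof -
    have ne: "{y. ?G y > 0} \<noteq> {}"
      using Qp_facts(2)[OF G, of 0 "Qp ?G 0 + 1"] by auto
    have "Inf {y. ?G y > 0} < u x + e" using q[of 0] e by (simp add: Qp_def)
    then obtain y0 where y0: "?G y0 > 0" "y0 < u x + e" using cInf_lessD[OF ne] by auto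
    define p where "p = min (?G y0 / 2) (1/2)"
    have p: "0 < p" "p < 1" "p < ?G y0" using y0 by (auto simp: p_def)
    have "Qp ?G p \<le> y0" using Qp_facts(1)[OF G, of p y0] p by auto
    then have "u (x + p) < u x + e" using q[of p] p y0 by simp
    then show ?thesis using p by (intro exI[of _ p]) auto
  qed
  then show ?thesis using continuous_at_right_real_increasing[of u x] u_mono by blast
qed

lemma u_left: "continuous (at_left x) u"
proof -
  let ?G = "T (Fu (x - 1))"
  have G: "?G \<in> cdfM" using TM[OF Fu_cdfM] .
  have q: "Qp ?G p = u (x - 1 + p)" if "0 \<le> p" "p < 1" for p
    using keyQ[OF Fu_cdfM that] Qp_Fu[OF that] by simp
  have qt: "QT ?G = u x" using keyT[OF Fu_cdfM] QT_Fu[of "x-1"] by simp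
  have "\<exists>\<delta>>0. u x - u (x - \<delta>) < e" if e: "e > 0" for e
  proof (rule ccontr)
    assume "\<not> ?thesis"
    then have h: "\<And>\<delta>. \<delta> > 0 \<Longrightarrow> u (x - \<delta>) \<le> u x - e" by force
    define z where "z = u x - e/2"
    have "p < ?G z" if p: "0 \<le> p" "p < 1" for p
    proof -
      have "Qp ?G p \<le> u x - e" using q[OF p] h[of "1 - p"] p by (simp add: algebra_simps)
      then have "Qp ?G p < z" using e by (simp add: z_def)
      then show ?thesis using Qp_facts(2)[OF G p] by simp
    qed
    then have "1 \<le> ?G z" using cdfM_bounds(1)[OF G, of z] by (metis less_irrefl not_le)
    then have "QT ?G \<le> z" using QT_facts(1)[OF G] by simp
    then show False using qt e by (simp add: z_def)
  qed
  then show ?thesis using continuous_at_left_real_increasing[of u x] u_mono by blast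
qed

lemma u_utility: "utility u"
  unfolding utility_def
proof
  show "mono u" using u_mono by (simp add: monoI)
  have "isCont u x" for x using continuous_at_split u_left u_right by blast
  then show "continuous_on UNIV u" by (simp add: continuous_at_imp_continuous_on)
qed

end



lemma cdfM_lims:
  assumes F: "F \<in> cdfM"
  shows "(F \<longlongrightarrow> 0) at_bot" "(F \<longlongrightarrow> 1) at_top"
proof -
  obtain a b where ab: "\<forall>x<a. F x = 0" "\<forall>x\<ge>b. F x = 1" using cdfM_D(3)[OF F] by blast
  have "\<forall>\<^sub>F x in at_bot. F x = 0" using ab(1) unfolding eventually_at_bot_linorder
    by (intro exI[of _ "a - 1"]) auto
  then show "(F \<longlongrightarrow> 0) at_bot" by (rule tendsto_eventually)
  have "\<forall>\<^sub>F x in at_top. F x = 1" using ab(2) unfolding eventually_at_top_linorder by blast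
  then show "(F \<longlongrightarrow> 1) at_top" by (rule tendsto_eventually)
qed

lemma IM_facts:
  assumes F: "F \<in> cdfM"
  shows "real_distribution (interval_measure F)"
    and "\<And>t. measure (interval_measure F) {..t} = F t"
proof -
  have m: "\<And>x y. x \<le> y \<Longrightarrow> F x \<le> F y" using cdfM_D(1)[OF F] by (simp add: monoD)
  show "real_distribution (interval_measure F)"
    by (rule real_distribution_interval_measure[OF m cdfM_D(2)[OF F] cdfM_lims[OF F]])
  show "measure (interval_measure F) {..t} = F t" for t
    by (rule measure_interval_measure_Iic[OF m cdfM_D(2)[OF F] cdfM_lims(1)[OF F]])
qed

lemma Tu_facts:
  assumes F: "F \<in> cdfM" and u: "utility u"
  shows "Tu u F y = measure (interval_measure F) {t. u t \<le> y}"
    and "{..t} \<subseteq> {t. u t \<le> y} \<Longrightarrow> F t \<le> Tu u F y"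
    and "{t. u t \<le> y} \<subseteq> {..t} \<Longrightarrow> Tu u F y \<le> F t"
    and "(\<forall>t. u t \<le> y) \<Longrightarrow> Tu u F y = 1"
    and "(\<forall>t. y < u t) \<Longrightarrow> Tu u F y = 0"
    and "0 \<le> Tu u F y" "Tu u F y \<le> 1"
    and "y \<le> y' \<Longrightarrow> Tu u F y \<le> Tu u F y'"
    and "continuous (at_right y) (Tu u F)"
proof -
  let ?M = "interval_measure F"
  interpret real_distribution ?M using IM_facts(1)[OF F] .
  have uc: "continuous_on UNIV u" using u unfolding utility_def by simp
  have um: "u \<in> borel_measurable ?M" using borel_measurable_continuous_onI[OF uc] by simp
  have S: "{t. u t \<le> z} \<in> sets ?M" for z
    using closed_Collect_le[OF uc continuous_on_const] by simp
  show e: "Tu u F z = measure ?M {t. u t \<le> z}" for z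
    unfolding Tu_def cdf_def using measure_distr[OF um, of "{..z}"] by (simp add: vimage_def)
  show "{..t} \<subseteq> {t. u t \<le> y} \<Longrightarrow> F t \<le> Tu u F y"
    using finite_measure_mono[of "{..t}" "{t. u t \<le> y}"] S IM_facts(2)[OF F, of t] e by simp
  show "{t. u t \<le> y} \<subseteq> {..t} \<Longrightarrow> Tu u F y \<le> F t"
    using finite_measure_mono[of "{t. u t \<le> y}" "{..t}"] IM_facts(2)[OF F, of t] e by simp
  show "(\<forall>t. u t \<le> y) \<Longrightarrow> Tu u F y = 1" using e prob_space by simp
  show "(\<forall>t. y < u t) \<Longrightarrow> Tu u F y = 0" using e by (simp add: not_le[symmetric])
  show "0 \<le> Tu u F y" using e by simp
  show "Tu u F y \<le> 1" using e by simp
  show "Tu u F y \<le> Tu u F y'" if "y \<le> y'"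
  proof -
    have "{t. u t \<le> y} \<subseteq> {t. u t \<le> y'}" using that by auto
    then show ?thesis using finite_measure_mono[of "{t. u t \<le> y}" "{t. u t \<le> y'}"] S e by simp
  qed
  interpret D: real_distribution "distr ?M borel u" using um by simp
  show "continuous (at_right y) (Tu u F)" unfolding Tu_def by (rule D.cdf_is_right_cont)
qed

lemma Tu_cdfM:
  assumes F: "F \<in> cdfM" and u: "utility u"
  shows "Tu u F \<in> cdfM"
proof -
  obtain a b where ab: "\<forall>x<a. F x = 0" "\<forall>x\<ge>b. F x = 1" using cdfM_D(3)[OF F] by blast
  have um: "mono u" using u unfolding utility_def by simp
  have "Tu u F y = 1" if "y \<ge> u b" for y
  proof -
    have "{..b} \<subseteq> {t. u t \<le> y}" using that monoD[OF um] by (auto intro: order_trans)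
    then show ?thesis using Tu_facts(2)[OF F u, of b y] Tu_facts(7)[OF F u, of y] ab by simp
  qed
  moreover have "Tu u F y = 0" if "y < u (a - 1)" for y
  proof -
    have "\<forall>t. u t \<le> y \<longrightarrow> t \<le> a-1" using that monoD[OF um] by (meson le_less_trans less_imp_le linorder_not_le)
    then have "{t. u t \<le> y} \<subseteq> {..a-1}" by auto
    then show ?thesis using Tu_facts(3)[OF F u, of y "a-1"] Tu_facts(6)[OF F u, of y] ab by simp
  qed
  moreover have "mono (Tu u F)" using Tu_facts(8)[OF F u] by (simp add: monoI)
  ultimately show ?thesis unfolding cdfM_def using Tu_facts(9)[OF F u] by blast
qed

lemma cont_exists_right:
  assumes u: "utility u" and "u s < y"
  shows "\<exists>t>s. u t < y"
proof -
  have "isCont u s" using u unfolding utility_def by (simp add: continuous_on_eq_continuous_at)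
  then have "\<forall>\<^sub>F t in at s. u t < y" using assms(2) by (simp add: isCont_def order_tendstoD(2))
  then obtain e where e: "e > 0" "\<And>t. t \<noteq> s \<Longrightarrow> dist t s < e \<Longrightarrow> u t < y"
    unfolding eventually_at by auto
  then show ?thesis by (intro exI[of _ "s + e/2"]) (auto simp: dist_real_def)
qed

lemma Qp_Tu:
  assumes F: "F \<in> cdfM" and u: "utility u" and p: "0 \<le> p" "p < 1"
  shows "Qp (Tu u F) p = u (Qp F p)"
proof -
  let ?G = "Tu u F" and ?c = "Qp F p"
  have G: "?G \<in> cdfM" using Tu_cdfM[OF F u] .
  have um: "mono u" and uc: "continuous_on UNIV u" using u unfolding utility_def by auto
  have "Qp ?G p \<le> u ?c"
  proof (rule dense_ge)
    fix z assume z: "u ?c < z"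
    obtain y where y: "y > ?c" "u y < z" using cont_exists_right[OF u z] by auto
    have "p < F y" using Qp_facts(2)[OF F p y(1)] .
    have "\<forall>t\<le>y. u t \<le> z" using y(2) monoD[OF um] by (meson order.trans less_imp_le)
    then have "{..y} \<subseteq> {t. u t \<le> z}" by auto
    moreover note \<open>p < F y\<close>
    ultimately have "p < ?G z" using Tu_facts(2)[OF F u, of y z] by simp
    then show "Qp ?G p \<le> z" using Qp_facts(1)[OF G p] by simp
  qed
  moreover have "\<not> Qp ?G p < u ?c"
  proof
    assume h: "Qp ?G p < u ?c"
    define z where "z = (Qp ?G p + u ?c)/2"
    have zl: "Qp ?G p < z" "z < u ?c" using h by (auto simp: z_def)
    have pz: "p < ?G z" using Qp_facts(2)[OF G p zl(1)] .
    let ?S = "{t. u t \<le> z}"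
    have "\<forall>t. u t \<le> z \<longrightarrow> t < ?c" using zl(2) monoD[OF um] by (meson le_less_trans linorder_not_le)
    then have Sb: "?S \<subseteq> {..<?c}" by auto
    show False
    proof (cases "?S = {}")
      case True
      then have "\<forall>t. z < u t" by (metis empty_Collect_eq not_le)
      then have "?G z = 0" using Tu_facts(5)[OF F u, of z] by simp
      then show False using pz p by simp
    next
      case False
      have bdd: "bdd_above ?S" using Sb unfolding bdd_above_def by (auto intro: less_imp_le)
      have cl: "closed ?S" using closed_Collect_le[OF uc continuous_on_const] .
      have sS: "Sup ?S \<in> ?S" using closed_contains_Sup[OF False bdd cl] .
      have "?S \<subseteq> {..Sup ?S}" using cSup_upper[OF _ bdd] by auto
      then have "?G z \<le> F (Sup ?S)" using Tu_facts(3)[OF F u] by simp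
      also have "F (Sup ?S) \<le> p" using Qp_facts(3)[OF F p] sS Sb by auto
      finally show False using pz by simp
    qed
  qed
  ultimately show ?thesis by simp
qed

lemma cdfM_Qp_unique_le:
  assumes G: "G \<in> cdfM" and H: "H \<in> cdfM" and q: "\<And>p. 0 \<le> p \<Longrightarrow> p < 1 \<Longrightarrow> Qp G p = Qp H p"
  shows "H x \<le> G x"
proof (rule ccontr)
  assume "\<not> H x \<le> G x"
  then have lt: "G x < H x" by simp
  define p where "p = (G x + H x)/2"
  have p: "0 \<le> p" "p < 1" "G x < p" "p < H x"
    using lt cdfM_bounds(1)[OF G, of x] cdfM_bounds(2)[OF H, of x] by (auto simp: p_def)
  have "Qp H p \<le> x" using Qp_facts(1)[OF H p(1,2)] p(4) by simp
  moreover obtain \<delta> where \<delta>: "\<delta> > 0" "G (x + \<delta>) - G x < p - G x"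
    using cdfM_D(2)[OF G, of x] continuous_at_right_real_increasing[of G x] cdfM_D(1)[OF G] p(3)
    by (metis diff_gt_0_iff_gt monoD)
  then have "\<not> Qp G p < x + \<delta>" using Qp_facts(2)[OF G p(1,2), of "x+\<delta>"] by auto
  ultimately show False using q[OF p(1,2)] \<delta>(1) by simp
qed

lemma cdfM_Qp_unique:
  assumes G: "G \<in> cdfM" and H: "H \<in> cdfM" and q: "\<And>p. 0 \<le> p \<Longrightarrow> p < 1 \<Longrightarrow> Qp G p = Qp H p"
  shows "G = H"
proof
  fix x show "G x = H x"
    using cdfM_Qp_unique_le[OF G H q, of x] cdfM_Qp_unique_le[OF H G, of x] q
    by (metis order_antisym)
qed



lemma Td_cdfM:
  assumes F: "F \<in> cdfM" and d: "distortion d"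
  shows "Td d F \<in> cdfM"
proof -
  let ?g = "\<lambda>y. d (F y)" and ?h = "Td d F"
  have h: "\<And>x. ?h x = Inf (?g ` {x<..})" using Td_eq(1)[OF F d] .
  have g0: "\<And>y. 0 \<le> ?g y" and g1: "\<And>y. ?g y \<le> 1" using Td_eq(2,3)[OF F d] by auto
  have gm: "\<And>y z. y \<le> z \<Longrightarrow> ?g y \<le> ?g z" using Td_eq(4)[OF F d] .
  have bdd: "bdd_below (?g ` A)" for A using g0 unfolding bdd_below_def by blast
  have d0: "d 0 = 0" and d1: "d 1 = 1" using d unfolding distortion_def by auto
  obtain a b where ab: "\<forall>x<a. F x = 0" "\<forall>x\<ge>b. F x = 1" using cdfM_D(3)[OF F] by blast
  have hm: "?h x \<le> ?h x'" if "x \<le> x'" for x x'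
    unfolding h by (rule cINF_greatest) (use that in \<open>auto intro!: cINF_lower[OF bdd]\<close>)
  have "continuous (at_right x) ?h" for x
  proof -
    have "\<exists>\<delta>>0. ?h (x + \<delta>) - ?h x < e" if e: "e > 0" for e
    proof -
      have "Inf (?g ` {x<..}) < ?h x + e" using h e by simp
      then obtain y0 where y0: "y0 > x" "?g y0 < ?h x + e"
        using cInf_lessD[of "?g ` {x<..}"] by auto
      have "?h (x + (y0 - x)/2) \<le> ?g y0" unfolding h
        by (rule cINF_lower[OF bdd]) (use y0 in \<open>auto simp: field_simps\<close>)
      then show ?thesis using y0 by (intro exI[of _ "(y0 - x)/2"]) auto
    qed
    then show ?thesis using continuous_at_right_real_increasing[of ?h x] hm by blast
  qed
  moreover have "?h x = 0" if "x < a" for x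
  proof -
    have "?h x \<le> ?g ((x+a)/2)" unfolding h by (rule cINF_lower[OF bdd]) (use that in auto)
    moreover have "0 \<le> ?h x" unfolding h by (rule cINF_greatest) (use g0 in auto)
    ultimately show ?thesis using ab(1) that d0 by simp
  qed
  moreover have "?h x = 1" if "x \<ge> b" for x
  proof -
    have "\<forall>y>x. ?g y = 1" using ab(2) that d1 by simp
    then have "?g ` {x<..} = {1}" by (auto intro: image_eqI[of _ _ "x+1"])
    then show ?thesis unfolding h by simp
  qed
  moreover have "mono ?h" using hm by (simp add: monoI)
  ultimately show ?thesis unfolding cdfM_def by blast
qed

lemma Tu_comm:
  assumes F: "F \<in> cdfM" and d: "distortion d" and u: "utility u"
  shows "Tu u (Td d F) = Td d (Tu u F)"
proof
  fix x
  let ?H = "Td d F" and ?G = "Tu u F"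
  have H: "?H \<in> cdfM" using Td_cdfM[OF F d] .
  have G: "?G \<in> cdfM" using Tu_cdfM[OF F u] .
  have um: "mono u" and uc: "continuous_on UNIV u" using u unfolding utility_def by auto
  have dm: "mono_on {0..1} d" and d0: "d 0 = 0" and d1: "d 1 = 1" using d unfolding distortion_def by auto
  have e: "Td d ?G x = Inf ((\<lambda>y. d (?G y)) ` {x<..})" using Td_eq(1)[OF G d] .
  have g0: "\<And>y. 0 \<le> d (?G y)" using Td_eq(2)[OF G d] .
  have bdd: "bdd_below ((\<lambda>y. d (?G y)) ` A)" for A using g0 unfolding bdd_below_def by blast
  have f0: "\<And>y. 0 \<le> d (F y)" using Td_eq(2)[OF F d] .
  have bddF: "bdd_below ((\<lambda>y. d (F y)) ` A)" for A using f0 unfolding bdd_below_def by blast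
  have dle: "d v \<le> d w" if "v \<le> w" "0 \<le> v" "w \<le> 1" for v w
    using mono_onD[OF dm, of v w] that by auto
  show "Tu u ?H x = Td d ?G x"
  proof (cases "\<forall>t. u t \<le> x")
    case True
    have "\<forall>y>x. d (?G y) = 1"
    proof (intro allI impI)
      fix y assume "y > x"
      then have "\<forall>t. u t \<le> y" using True by (meson less_imp_le order.trans)
      then show "d (?G y) = 1" using Tu_facts(4)[OF F u] d1 by simp
    qed
    then have "(\<lambda>y. d (?G y)) ` {x<..} = {1}" by (auto intro: image_eqI[of _ _ "x+1"])
    then show ?thesis using e Tu_facts(4)[OF H u] True by simp
  next
    case nA: False
    show ?thesis
    proof (cases "\<forall>t. x < u t")
      case True
      obtain a b where ab: "\<forall>x<a. F x = 0" "\<forall>x\<ge>b. F x = 1" using cdfM_D(3)[OF F] by blast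
      define y where "y = (x + u (a-1))/2"
      have xy: "x < y" "y < u (a-1)" using True[rule_format, of "a-1"] by (auto simp: y_def)
      have "\<forall>t. u t \<le> y \<longrightarrow> t \<le> a-1" using xy(2) monoD[OF um] by (meson le_less_trans less_imp_le linorder_not_le)
      then have "{t. u t \<le> y} \<subseteq> {..a-1}" by auto
      then have "?G y \<le> 0" using Tu_facts(3)[OF F u, of y "a-1"] ab by simp
      then have "?G y = 0" using Tu_facts(6)[OF F u, of y] by simp
      then have "Inf ((\<lambda>y. d (?G y)) ` {x<..}) \<le> 0"
        using cINF_lower[OF bdd, of y "{x<..}"] xy d0 by simp
      moreover have "0 \<le> Inf ((\<lambda>y. d (?G y)) ` {x<..})" by (rule cINF_greatest) (use g0 in auto)
      ultimately show ?thesis using e Tu_facts(5)[OF H u] True by simp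
    next
      case nB: False
      let ?S = "{t. u t \<le> x}"
      have ne: "?S \<noteq> {}" using nB by (auto simp: not_less)
      obtain t0 where t0: "x < u t0" using nA by (auto simp: not_le)
      have "\<forall>t. u t \<le> x \<longrightarrow> t \<le> t0" using t0 monoD[OF um] by (meson le_less_trans less_imp_le linorder_not_le)
      then have bddS: "bdd_above ?S" unfolding bdd_above_def by blast
      have cl: "closed ?S" using closed_Collect_le[OF uc continuous_on_const] .
      define s where "s = Sup ?S"
      have sS: "u s \<le> x" using closed_contains_Sup[OF ne bddS cl] by (simp add: s_def)
      have above: "x < u t" if "t > s" for t
        using cSup_upper[OF _ bddS, of t] that by (force simp: s_def not_le[of "u t"])
      have "?S = {..s}"
      proof
        show "?S \<subseteq> {..s}" using cSup_upper[OF _ bddS] by (auto simp: s_def)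
        show "{..s} \<subseteq> ?S" using sS monoD[OF um] by (auto intro: order_trans)
      qed
      then have "Tu u ?H x = ?H s" using Tu_facts(2)[OF H u, of s x] Tu_facts(3)[OF H u, of x s] by simp
      also have "\<dots> = Inf ((\<lambda>t. d (F t)) ` {s<..})" using Td_eq(1)[OF F d] .
      also have "\<dots> = Inf ((\<lambda>y. d (?G y)) ` {x<..})"
      proof (rule antisym)
        show "Inf ((\<lambda>t. d (F t)) ` {s<..}) \<le> Inf ((\<lambda>y. d (?G y)) ` {x<..})"
        proof (rule cINF_greatest)
          show "{x<..} \<noteq> {}" by auto
          fix y assume "y \<in> {x<..}"
          then have "u s < y" using sS by simp
          then obtain t where t: "t > s" "u t < y" using cont_exists_right[OF u] by blast
          have "\<forall>r\<le>t. u r \<le> y" using t(2) monoD[OF um] by (meson order.trans less_imp_le)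
          then have "{..t} \<subseteq> {r. u r \<le> y}" by auto
          then have "F t \<le> ?G y" using Tu_facts(2)[OF F u] by simp
          then have "d (F t) \<le> d (?G y)" using dle cdfM_bounds[OF F, of t] cdfM_bounds[OF G, of y] by simp
          moreover have "Inf ((\<lambda>t. d (F t)) ` {s<..}) \<le> d (F t)" using cINF_lower[OF bddF] t(1) by simp
          ultimately show "Inf ((\<lambda>t. d (F t)) ` {s<..}) \<le> d (?G y)" by simp
        qed
        show "Inf ((\<lambda>y. d (?G y)) ` {x<..}) \<le> Inf ((\<lambda>t. d (F t)) ` {s<..})"
        proof (rule cINF_greatest)
          show "{s<..} \<noteq> {}" by auto
          fix t assume "t \<in> {s<..}"
          then have xt: "x < u t" using above by simp
          define y where "y = (x + u t)/2"
          have y: "x < y" "y < u t" using xt by (auto simp: y_def)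
          have "\<forall>r. u r \<le> y \<longrightarrow> r \<le> t" using y(2) monoD[OF um] by (meson le_less_trans less_imp_le linorder_not_le)
          then have "{r. u r \<le> y} \<subseteq> {..t}" by auto
          then have "?G y \<le> F t" using Tu_facts(3)[OF F u] by simp
          then have "d (?G y) \<le> d (F t)" using dle cdfM_bounds[OF F, of t] cdfM_bounds[OF G, of y] by simp
          moreover have "Inf ((\<lambda>y. d (?G y)) ` {x<..}) \<le> d (?G y)" using cINF_lower[OF bdd] y(1) by simp
          ultimately show "Inf ((\<lambda>y. d (?G y)) ` {x<..}) \<le> d (F t)" by simp
        qed
      qed
      finally show ?thesis using e by simp
    qed
  qed
qed

theorem theorem2:
  fixes T :: "(real \<Rightarrow> real) \<Rightarrow> (real \<Rightarrow> real)"
  assumes "\<forall>F\<in>cdfM. T F \<in> cdfM"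
  shows "(\<forall>d. distortion d \<longrightarrow> (\<forall>F\<in>cdfM. T (Td d F) = Td d (T F)))
         \<longleftrightarrow> (\<exists>u. utility u \<and> (\<forall>F\<in>cdfM. T F = Tu u F))"
proof
  assume c: "\<forall>d. distortion d \<longrightarrow> (\<forall>F\<in>cdfM. T (Td d F) = Td d (T F))"
  interpret commT T using assms c by unfold_locales auto
  have "T F = Tu u F" if F: "F \<in> cdfM" for F
    by (rule cdfM_Qp_unique[OF TM[OF F] Tu_cdfM[OF F u_utility]])
       (simp add: keyQ[OF F] Qp_Tu[OF F u_utility])
  then show "\<exists>u. utility u \<and> (\<forall>F\<in>cdfM. T F = Tu u F)" using u_utility by blast
next
  assume "\<exists>u. utility u \<and> (\<forall>F\<in>cdfM. T F = Tu u F)"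
  then obtain u where u: "utility u" "\<forall>F\<in>cdfM. T F = Tu u F" by blast
  show "\<forall>d. distortion d \<longrightarrow> (\<forall>F\<in>cdfM. T (Td d F) = Td d (T F))"
  proof (intro allI impI ballI)
    fix d F assume d: "distortion d" and F: "F \<in> cdfM"
    show "T (Td d F) = Td d (T F)"
      using u(2) Td_cdfM[OF F d] F Tu_comm[OF F d u(1)] by simp
  qed
qed


end
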